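(* Let $\pi$ be a probability density on $\mathbb{R}^d$, let $0<\beta_n<\dots<\beta_1<\beta_0=1$, and consider a Markov chain on $(\mathbb{R}^d)^{n+1}$ that is in stationarity with respect to $$\pi_n(x_0,\dots,x_n)\propto \prod_{m=0}^n \pi(x_m)^{\beta_m}.$$ Let $\mu_1,\dots,\mu_K\in\mathbb{R}^d$ and let $m(\cdot,\cdot)$ be a metric on $\mathbb{R}^d$. Suppose a temperature swap move is proposed between the components $x_i$ and $x_j$ at adjacent inverse temperatures $\beta_i$ and $\beta_j$, in which the component at level $\beta_j$ is replaced by $g(x_i,\beta_i,\beta_j)$ and the component at level $\beta_i$ is replaced by $g(x_j,\beta_j,\beta_i)$ (all other components unchanged), and that this proposal is accepted with probability $$\min\left(1,\frac{\pi(g(x_i,\beta_i,\beta_j))^{\beta_j}\,\pi(g(x_j,\beta_j,\beta_i))^{\beta_i}}{\pi(x_i)^{\beta_i}\,\pi(x_j)^{\beta_j}}\mathbb{1}_{\{x_i\in A_{ij}\}}\mathbb{1}_{\{x_j\in A_{ji}\}}\right).$$ Then the chain is invariant with respect to $\pi_n$.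
   Context: The mode allocating function is $Z(x)=\arg\min_{h\in\{1,\dots,K\}} m(x,\mu_h)$ (with a fixed tie-breaking rule). For inverse temperatures $\beta_i,\beta_j$ and $\nu\in\mathbb{R}^d$ set $g_{ij}(x,\nu)=(\beta_i/\beta_j)^{1/2}(x-\nu)+\nu$, define the transformation $g(x,\beta_i,\beta_j)=g_{ij}(x,\mu_{Z(x)})$, and define $A_{ij}=\{x\in\mathbb{R}^d: Z(g_{ij}(x,\mu_{Z(x)}))=Z(x)\}$. *)

theory Defs
  imports "HOL-Analysis.Analysis" "HOL-Probability.Probability"
begin

text \<open>Points of R^d are elements of a Euclidean space 'a (d = DIM('a)).
  States of the tempered chain are functions on the index set {..n},
  living in the product space PiM {..n} (\<lambda>_. lborel).\<close>

definition gmap :: "real \<Rightarrow> real \<Rightarrow> 'a::real_vector \<Rightarrow> 'a \<Rightarrow> 'a" where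
  "gmap bi bj \<nu> x = sqrt (bi / bj) *\<^sub>R (x - \<nu>) + \<nu>"

definition gtrans :: "('a \<Rightarrow> nat) \<Rightarrow> (nat \<Rightarrow> 'a) \<Rightarrow> real \<Rightarrow> real \<Rightarrow> 'a \<Rightarrow> 'a::real_vector" where
  "gtrans Z \<mu> bi bj x = gmap bi bj (\<mu> (Z x)) x"

definition Aset :: "('a \<Rightarrow> nat) \<Rightarrow> (nat \<Rightarrow> 'a) \<Rightarrow> real \<Rightarrow> real \<Rightarrow> 'a::real_vector set" where
  "Aset Z \<mu> bi bj = {x. Z (gmap bi bj (\<mu> (Z x)) x) = Z x}"

definition tempered_density :: "('a \<Rightarrow> real) \<Rightarrow> (nat \<Rightarrow> real) \<Rightarrow> nat \<Rightarrow> (nat \<Rightarrow> 'a) \<Rightarrow> real" where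
  "tempered_density \<pi> \<beta> n x = (\<Prod>m\<in>{..n}. \<pi> (x m) powr \<beta> m)"

definition tempered_measure :: "('a::euclidean_space \<Rightarrow> real) \<Rightarrow> (nat \<Rightarrow> real) \<Rightarrow> nat \<Rightarrow> (nat \<Rightarrow> 'a) measure" where
  "tempered_measure \<pi> \<beta> n =
     density (PiM {..n} (\<lambda>_. lborel))
       (\<lambda>x. ennreal (tempered_density \<pi> \<beta> n x /
          enn2real (\<integral>\<^sup>+ y. ennreal (tempered_density \<pi> \<beta> n y) \<partial>PiM {..n} (\<lambda>_. lborel))))"

definition swap_proposal :: "('a \<Rightarrow> nat) \<Rightarrow> (nat \<Rightarrow> 'a) \<Rightarrow> (nat \<Rightarrow> real) \<Rightarrow> nat \<Rightarrow> nat
    \<Rightarrow> (nat \<Rightarrow> 'a) \<Rightarrow> (nat \<Rightarrow> 'a::real_vector)" where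
  "swap_proposal Z \<mu> \<beta> i j x =
     x(j := gtrans Z \<mu> (\<beta> i) (\<beta> j) (x i), i := gtrans Z \<mu> (\<beta> j) (\<beta> i) (x j))"

definition swap_accept :: "('a \<Rightarrow> real) \<Rightarrow> ('a \<Rightarrow> nat) \<Rightarrow> (nat \<Rightarrow> 'a) \<Rightarrow> (nat \<Rightarrow> real) \<Rightarrow> nat \<Rightarrow> nat
    \<Rightarrow> (nat \<Rightarrow> 'a::real_vector) \<Rightarrow> real" where
  "swap_accept \<pi> Z \<mu> \<beta> i j x =
     min 1 ((\<pi> (gtrans Z \<mu> (\<beta> i) (\<beta> j) (x i)) powr \<beta> j * \<pi> (gtrans Z \<mu> (\<beta> j) (\<beta> i) (x j)) powr \<beta> i)
            / (\<pi> (x i) powr \<beta> i * \<pi> (x j) powr \<beta> j)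
            * indicator (Aset Z \<mu> (\<beta> i) (\<beta> j)) (x i)
            * indicator (Aset Z \<mu> (\<beta> j) (\<beta> i)) (x j))"

definition swap_kernel :: "('a \<Rightarrow> real) \<Rightarrow> ('a \<Rightarrow> nat) \<Rightarrow> (nat \<Rightarrow> 'a) \<Rightarrow> (nat \<Rightarrow> real) \<Rightarrow> nat \<Rightarrow> nat
    \<Rightarrow> (nat \<Rightarrow> 'a::real_vector) \<Rightarrow> (nat \<Rightarrow> 'a) set \<Rightarrow> real" where
  "swap_kernel \<pi> Z \<mu> \<beta> i j x A =
     swap_accept \<pi> Z \<mu> \<beta> i j x * indicator A (swap_proposal Z \<mu> \<beta> i j x)
     + (1 - swap_accept \<pi> Z \<mu> \<beta> i j x) * indicator A x"

end

theory Submission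
  imports Defs
begin

lemma measurable_upd2:
  fixes F G :: "('i \<Rightarrow> 'a::euclidean_space) \<Rightarrow> 'a"
  assumes "i \<in> I" "j \<in> I"
    and [measurable]: "F \<in> borel_measurable (PiM I (\<lambda>_. lborel))"
    and [measurable]: "G \<in> borel_measurable (PiM I (\<lambda>_. lborel))"
  shows "(\<lambda>x. x(j := F x, i := G x)) \<in> PiM I (\<lambda>_. lborel) \<rightarrow>\<^sub>M PiM I (\<lambda>_. lborel)"
proof -
  have I: "I = I \<union> {j}" "I = I \<union> {i}" using assms by auto
  have 1: "(\<lambda>x. x(j := F x)) \<in> PiM I (\<lambda>_. lborel) \<rightarrow>\<^sub>M PiM I (\<lambda>_. lborel)"
    by (rule measurable_fun_upd[OF I(1)]) auto
  show ?thesis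
    by (rule measurable_fun_upd[OF I(2) 1]) auto
qed

lemma lborel_affine_pre:
  fixes a :: "'a::euclidean_space" and c :: real
  assumes c: "c > 0" and E: "E \<in> sets borel"
  shows "emeasure lborel E = ennreal (c ^ DIM('a)) * emeasure lborel ((\<lambda>x. c *\<^sub>R (x - a) + a) -` E)"
proof -
  have eq: "(\<lambda>x. (a - c *\<^sub>R a) + c *\<^sub>R x) = (\<lambda>x. c *\<^sub>R (x - a) + a)"
    by (auto simp: algebra_simps)
  have "emeasure lborel E = emeasure (density (distr lborel borel (\<lambda>x. (a - c *\<^sub>R a) + c *\<^sub>R x)) (\<lambda>_. \<bar>c\<bar>^DIM('a))) E"
    using lborel_affine[of c "a - c *\<^sub>R a"] c by simp
  also have "\<dots> = ennreal (c ^ DIM('a)) * emeasure lborel ((\<lambda>x. c *\<^sub>R (x - a) + a) -` E)"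
    using E c unfolding eq
    by (simp add: emeasure_density nn_integral_cmult_indicator emeasure_distr)
  finally show ?thesis .
qed

lemma PiM_swap_affine:
  fixes a b :: "'a::euclidean_space" and c c' :: real
  assumes I: "finite I" "i \<in> I" "j \<in> I" "i \<noteq> j" and c: "c > 0" "c' > 0" "c * c' = 1"
  shows "distr (PiM I (\<lambda>_. lborel)) (PiM I (\<lambda>_. lborel))
           (\<lambda>x. x(j := c *\<^sub>R (x i - a) + a, i := c' *\<^sub>R (x j - b) + b)) = PiM I (\<lambda>_. lborel)"
    (is "distr ?P ?P ?L = ?P")
proof -
  interpret product_sigma_finite "\<lambda>_. lborel :: 'a measure" by standard
  have Lm: "?L \<in> ?P \<rightarrow>\<^sub>M ?P"
    using measurable_upd2[OF I(2,3), of "\<lambda>x. c *\<^sub>R (x i - a) + a" "\<lambda>x. c' *\<^sub>R (x j - b) + b"] I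
    by simp
  define g where "g = (\<lambda>x::'a. c *\<^sub>R (x - a) + a)"
  define h where "h = (\<lambda>x::'a. c' *\<^sub>R (x - b) + b)"
  have gm[measurable]: "g \<in> borel_measurable borel" unfolding g_def by measurable
  have hm[measurable]: "h \<in> borel_measurable borel" unfolding h_def by measurable
  have preg: "g -` B \<in> sets borel" if "B \<in> sets borel" for B
    using measurable_sets[OF gm that] by simp
  have preh: "h -` B \<in> sets borel" if "B \<in> sets borel" for B
    using measurable_sets[OF hm that] by simp
  show ?thesis
  proof (rule PiM_eqI)
    show "finite I" by fact
    show "sets (distr ?P ?P ?L) = sets ?P" by simp
    fix A assume A: "\<And>k. k \<in> I \<Longrightarrow> A k \<in> sets (lborel :: 'a measure)"
    define A' where "A' = A(i := g -` A j, j := h -` A i)"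
    have A'm: "A' k \<in> sets lborel" if "k \<in> I" for k
      using A[OF that] A[OF I(2)] A[OF I(3)] unfolding A'_def
      using I by (auto intro!: preg preh)
    have pre: "?L -` Pi\<^sub>E I A \<inter> space ?P = Pi\<^sub>E I A'"
    proof (intro set_eqI iffI)
      fix x assume "x \<in> ?L -` Pi\<^sub>E I A \<inter> space ?P"
      then show "x \<in> Pi\<^sub>E I A'"
        using I unfolding A'_def g_def h_def
        by (auto simp: space_PiM PiE_iff split: if_splits)
    next
      fix x assume x: "x \<in> Pi\<^sub>E I A'"
      show "x \<in> ?L -` Pi\<^sub>E I A \<inter> space ?P"
        using I x unfolding A'_def g_def h_def
        by (auto simp: space_PiM PiE_iff extensional_def split: if_splits)
    qed
    have "emeasure (distr ?P ?P ?L) (Pi\<^sub>E I A) = emeasure ?P (Pi\<^sub>E I A')"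
      using A Lm I by (subst emeasure_distr) (auto simp: pre intro!: sets_PiM_I_finite)
    also have "\<dots> = (\<Prod>k\<in>I. emeasure lborel (A' k))"
      using A'm I by (simp add: emeasure_PiM)
    also have "\<dots> = emeasure lborel (A' i) * (emeasure lborel (A' j) * (\<Prod>k\<in>I-{i}-{j}. emeasure lborel (A k)))"
      using I unfolding A'_def
      by (auto simp add: prod.remove[of I i] prod.remove[of "I-{i}" j] intro!: prod.cong arg_cong2[where f="(*)"])
    also have "\<dots> = emeasure lborel (A i) * (emeasure lborel (A j) * (\<Prod>k\<in>I-{i}-{j}. emeasure lborel (A k)))"
    proof -
      have 1: "emeasure lborel (A j) = ennreal (c ^ DIM('a)) * emeasure lborel (A' i)"
        using lborel_affine_pre[OF c(1), of "A j" a] A[OF I(3)] I unfolding A'_def g_def by simp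
      have 2: "emeasure lborel (A i) = ennreal (c' ^ DIM('a)) * emeasure lborel (A' j)"
        using lborel_affine_pre[OF c(2), of "A i" b] A[OF I(2)] I unfolding A'_def h_def by simp
      have 3: "ennreal (c ^ DIM('a)) * ennreal (c' ^ DIM('a)) = 1"
        using c by (simp flip: ennreal_mult power_mult_distrib)
      show ?thesis unfolding 1 2
      proof -
        have "ennreal (c' ^ DIM('a)) * emeasure lborel (A' j) *
          (ennreal (c ^ DIM('a)) * emeasure lborel (A' i) * (\<Prod>k\<in>I-{i}-{j}. emeasure lborel (A k)))
          = (ennreal (c ^ DIM('a)) * ennreal (c' ^ DIM('a))) * (emeasure lborel (A' i) *
             (emeasure lborel (A' j) * (\<Prod>k\<in>I-{i}-{j}. emeasure lborel (A k))))"
          by (simp only: ac_simps)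
        then show "emeasure lborel (A' i) * (emeasure lborel (A' j) * (\<Prod>k\<in>I-{i}-{j}. emeasure lborel (A k))) =
          ennreal (c' ^ DIM('a)) * emeasure lborel (A' j) *
          (ennreal (c ^ DIM('a)) * emeasure lborel (A' i) * (\<Prod>k\<in>I-{i}-{j}. emeasure lborel (A k)))"
          unfolding 3 by simp
      qed
    qed
    also have "\<dots> = (\<Prod>k\<in>I. emeasure lborel (A k))"
      using I by (simp add: prod.remove[of I i] prod.remove[of "I-{i}" j])
    finally show "emeasure (distr ?P ?P ?L) (Pi\<^sub>E I A) = (\<Prod>k\<in>I. emeasure lborel (A k))" .
  qed
qed

lemma gmap_inv:
  assumes "b1 > 0" "b2 > 0"
  shows "gmap b2 b1 \<nu> (gmap b1 b2 \<nu> x) = x"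
proof -
  have "sqrt (b2 / b1) * sqrt (b1 / b2) = 1"
    using assms by (simp flip: real_sqrt_mult)
  then show ?thesis unfolding gmap_def by (simp add: scaleR_scaleR)
qed

lemma Aset_facts:
  assumes "b1 > 0" "b2 > 0" "z \<in> Aset Z \<mu> b1 b2"
  shows "Z (gtrans Z \<mu> b1 b2 z) = Z z"
    and "gtrans Z \<mu> b2 b1 (gtrans Z \<mu> b1 b2 z) = z"
    and "gtrans Z \<mu> b1 b2 z \<in> Aset Z \<mu> b2 b1"
proof -
  show 1: "Z (gtrans Z \<mu> b1 b2 z) = Z z"
    using assms(3) unfolding Aset_def gtrans_def by simp
  show 2: "gtrans Z \<mu> b2 b1 (gtrans Z \<mu> b1 b2 z) = z"
    unfolding gtrans_def using 1 gmap_inv[OF assms(1,2)] by (simp add: gtrans_def)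
  show "gtrans Z \<mu> b1 b2 z \<in> Aset Z \<mu> b2 b1"
    using 1 2 unfolding Aset_def by (simp add: gtrans_def)
qed

lemma min_mult_div:
  fixes a b :: real
  assumes "a \<ge> 0" "b \<ge> 0"
  shows "a * min 1 (b / a) = min a b"
proof (cases "a = 0")
  case False
  then have "a > 0" using assms by simp
  then show ?thesis by (simp add: min_def field_simps)
qed (use assms in simp)

lemma beta_ge:
  fixes \<beta> :: "nat \<Rightarrow> real"
  assumes "\<And>k. k < n \<Longrightarrow> \<beta> (Suc k) < \<beta> k" "k \<le> n"
  shows "\<beta> n \<le> \<beta> k"
  using assms(2)
proof (induction rule: dec_induct)
  case (step m)
  then show ?case using assms(1)[of m] by simp
qed simp

theorem proposition1:
  fixes \<pi> :: "'a::euclidean_space \<Rightarrow> real"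
    and \<mu> :: "nat \<Rightarrow> 'a"
    and m :: "'a \<Rightarrow> 'a \<Rightarrow> real"
    and Z :: "'a \<Rightarrow> nat"
    and \<beta> :: "nat \<Rightarrow> real"
    and n K i j :: nat
  assumes pi_nonneg: "\<And>x. \<pi> x \<ge> 0"
    and pi_meas: "\<pi> \<in> borel_measurable lborel"
    and pi_prob: "(\<integral>\<^sup>+ x. ennreal (\<pi> x) \<partial>lborel) = 1"
    and beta0: "\<beta> 0 = 1"
    and beta_pos: "0 < \<beta> n"
    and beta_decr: "\<And>k. k < n \<Longrightarrow> \<beta> (Suc k) < \<beta> k"
    and normalisable: "(\<integral>\<^sup>+ y. ennreal (tempered_density \<pi> \<beta> n y) \<partial>PiM {..n} (\<lambda>_. lborel)) < \<infinity>"
    and metric_eq: "\<And>x y. m x y = 0 \<longleftrightarrow> x = y"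
    and metric_sym: "\<And>x y. m x y = m y x"
    and metric_tri: "\<And>x y z. m x z \<le> m x y + m y z"
    and K_pos: "1 \<le> K"
    and Z_range: "\<And>x. Z x \<in> {1..K}"
    and Z_argmin: "\<And>x h. h \<in> {1..K} \<Longrightarrow> m x (\<mu> (Z x)) \<le> m x (\<mu> h)"
    and Z_meas: "Z \<in> borel \<rightarrow>\<^sub>M count_space UNIV"
    and ij: "i \<le> n" "j \<le> n"
    and adjacent: "j = Suc i \<or> i = Suc j"
  shows "\<forall>A \<in> sets (tempered_measure \<pi> \<beta> n).
           (\<integral>\<^sup>+ x. ennreal (swap_kernel \<pi> Z \<mu> \<beta> i j x A) \<partial>tempered_measure \<pi> \<beta> n)
             = emeasure (tempered_measure \<pi> \<beta> n) A"
proof -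
  let ?P = "PiM {..n} (\<lambda>_. lborel :: 'a measure)"
  have ijne: "i \<noteq> j" using adjacent by auto
  have bi: "\<beta> i > 0" using beta_ge[of n \<beta> i, OF beta_decr ij(1)] beta_pos by simp
  have bj: "\<beta> j > 0" using beta_ge[of n \<beta> j, OF beta_decr ij(2)] beta_pos by simp
  define Ai where "Ai = Aset Z \<mu> (\<beta> i) (\<beta> j)"
  define Aj where "Aj = Aset Z \<mu> (\<beta> j) (\<beta> i)"
  define Gij where "Gij = gtrans Z \<mu> (\<beta> i) (\<beta> j)"
  define Gji where "Gji = gtrans Z \<mu> (\<beta> j) (\<beta> i)"
  define p where "p = tempered_density \<pi> \<beta> n"
  define c0 where "c0 = enn2real (\<integral>\<^sup>+ y. ennreal (p y) \<partial>?P)"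
  define q where "q x = p x / c0" for x
  define \<alpha> where "\<alpha> = swap_accept \<pi> Z \<mu> \<beta> i j"
  define T where "T = swap_proposal Z \<mu> \<beta> i j"
  define L where "L k l x = x(j := gmap (\<beta> i) (\<beta> j) (\<mu> k) (x i), i := gmap (\<beta> j) (\<beta> i) (\<mu> l) (x j))"
    for k l and x :: "nat \<Rightarrow> 'a"
  define S where "S k l = {x :: nat \<Rightarrow> 'a. Z (x i) = k \<and> Z (x j) = l \<and> x i \<in> Ai \<and> x j \<in> Aj}" for k l
  define s where "s x = ennreal (q x * \<alpha> x)" for x
  define w where "w k l x = (if Z (x i) = k \<and> Z (x j) = l \<and> x i \<in> Ai \<and> x j \<in> Aj then s x else 0)" for k l x

  have [measurable]: "Z \<in> borel \<rightarrow>\<^sub>M count_space UNIV" by (rule Z_meas)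
  have pim[measurable]: "\<pi> \<in> borel_measurable borel" using pi_meas by simp
  have muZ[measurable]: "(\<lambda>x. \<mu> (Z x)) \<in> borel_measurable borel"
    by (rule measurable_compose[OF Z_meas]) simp
  have gtm[measurable]: "gtrans Z \<mu> b1 b2 \<in> borel_measurable borel" for b1 b2
    unfolding gtrans_def gmap_def by measurable
  have Asetm[measurable]: "Aset Z \<mu> b1 b2 \<in> sets borel" for b1 b2
  proof -
    define F where "F x = Z (gmap b1 b2 (\<mu> (Z x)) x)" for x
    have Fm: "F \<in> borel \<rightarrow>\<^sub>M count_space UNIV"
      unfolding F_def gmap_def by measurable
    have eq: "Aset Z \<mu> b1 b2 = (\<Union>k. F -` {k} \<inter> Z -` {k})"
      unfolding Aset_def F_def by auto
    show ?thesis unfolding eq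
      using measurable_sets[OF Fm] measurable_sets[OF Z_meas] by auto
  qed
  have pnn: "p x \<ge> 0" for x
    unfolding p_def tempered_density_def by (auto intro!: prod_nonneg)
  have c0nn: "c0 \<ge> 0" unfolding c0_def by simp
  have qnn: "q x \<ge> 0" for x unfolding q_def using pnn c0nn by simp
  have ratnn: "0 \<le> (\<pi> (Gij (x i)) powr \<beta> j * \<pi> (Gji (x j)) powr \<beta> i)
            / (\<pi> (x i) powr \<beta> i * \<pi> (x j) powr \<beta> j)" for x
    by simp
  have \<alpha>_eq: "\<alpha> x = min 1 ((\<pi> (Gij (x i)) powr \<beta> j * \<pi> (Gji (x j)) powr \<beta> i)
            / (\<pi> (x i) powr \<beta> i * \<pi> (x j) powr \<beta> j) * indicator Ai (x i) * indicator Aj (x j))" for x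
    unfolding \<alpha>_def swap_accept_def Gij_def Gji_def Ai_def Aj_def by simp
  have \<alpha>01: "0 \<le> \<alpha> x" "\<alpha> x \<le> 1" for x
    unfolding \<alpha>_eq using ratnn[of x] by (auto simp: indicator_def)
  have \<alpha>0: "\<alpha> x = 0" if "\<not> (x i \<in> Ai \<and> x j \<in> Aj)" for x
    unfolding \<alpha>_eq using that by (auto simp: indicator_def)

  have iin[simp]: "i \<in> {..n}" "j \<in> {..n}" using ij by auto
  have pm[measurable]: "p \<in> borel_measurable ?P"
    unfolding p_def tempered_density_def by measurable
  have qm[measurable]: "q \<in> borel_measurable ?P"
    unfolding q_def[abs_def] by measurable
  have ci[measurable]: "(\<lambda>x. x i) \<in> borel_measurable ?P" "(\<lambda>x. x j) \<in> borel_measurable ?P"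
    using measurable_component_singleton[OF iin(1), of "\<lambda>_. lborel"]
      measurable_component_singleton[OF iin(2), of "\<lambda>_. lborel"] by simp_all
  have t1: "(\<lambda>x. indicat_real Ai (x i)) \<in> borel_measurable ?P" unfolding Ai_def by measurable
  have t2: "(\<lambda>x. \<pi> (Gij (x i)) powr \<beta> j) \<in> borel_measurable ?P" unfolding Gij_def by measurable
  have \<alpha>m[measurable]: "\<alpha> \<in> borel_measurable ?P"
    unfolding \<alpha>_eq[abs_def] Gij_def Gji_def Ai_def Aj_def by measurable
  have sm[measurable]: "s \<in> borel_measurable ?P"
    unfolding s_def[abs_def] by measurable
  have Tx: "T x = x(j := Gij (x i), i := Gji (x j))" for x
    unfolding T_def swap_proposal_def Gij_def Gji_def by simp
  have Tm[measurable]: "T \<in> ?P \<rightarrow>\<^sub>M ?P"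
    unfolding Tx[abs_def] Gij_def Gji_def
    by (rule measurable_upd2) (use ij in auto)
  have Lpres: "distr ?P ?P (L k l) = ?P" for k l
  proof -
    have "L k l = (\<lambda>x. x(j := sqrt (\<beta> i / \<beta> j) *\<^sub>R (x i - \<mu> k) + \<mu> k,
                          i := sqrt (\<beta> j / \<beta> i) *\<^sub>R (x j - \<mu> l) + \<mu> l))"
      unfolding L_def gmap_def by simp
    moreover have "sqrt (\<beta> i / \<beta> j) * sqrt (\<beta> j / \<beta> i) = 1"
      using bi bj by (simp flip: real_sqrt_mult)
    ultimately show ?thesis
      using PiM_swap_affine[of "{..n}" i j "sqrt (\<beta> i / \<beta> j)" "sqrt (\<beta> j / \<beta> i)" "\<mu> k" "\<mu> l"]
        ij ijne bi bj by simp
  qed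
  have Lm[measurable]: "L k l \<in> ?P \<rightarrow>\<^sub>M ?P" for k l
    unfolding L_def[abs_def] gmap_def
    by (rule measurable_upd2) (use ij in auto)

  have fa: "T x = L k l x" if "x \<in> S k l" for x k l
    using that unfolding Tx L_def S_def Gij_def Gji_def gtrans_def by auto
  have fd: "L l k (L k l x) = x" for x k l
    using ijne unfolding L_def by (simp add: gmap_inv[OF bi bj] gmap_inv[OF bj bi])
  have Ti: "Gji (Gij (x i)) = x i" "Gij (x i) \<in> Aj" "Z (Gij (x i)) = Z (x i)" if "x i \<in> Ai" for x
    using Aset_facts[OF bi bj, of "x i" Z \<mu>] that unfolding Ai_def Aj_def Gij_def Gji_def by auto
  have Tj: "Gij (Gji (x j)) = x j" "Gji (x j) \<in> Ai" "Z (Gji (x j)) = Z (x j)" if "x j \<in> Aj" for x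
    using Aset_facts[OF bj bi, of "x j" Z \<mu>] that unfolding Ai_def Aj_def Gij_def Gji_def by auto
  have fb: "L k l x \<in> S l k" if "x \<in> S k l" for x k l
  proof -
    have e: "L k l x = x(j := Gij (x i), i := Gji (x j))" using fa[OF that] Tx by simp
    show ?thesis using that Ti[of x] Tj[of x] ijne unfolding S_def e by auto
  qed
  have psplit: "p z = \<pi> (z i) powr \<beta> i * (\<pi> (z j) powr \<beta> j * (\<Prod>m\<in>{..n}-{i}-{j}. \<pi> (z m) powr \<beta> m))" for z
    unfolding p_def tempered_density_def using ij ijne
    by (simp add: prod.remove[of "{..n}" i] prod.remove[of "{..n}-{i}" j])
  have fc: "s (T x) = s x" if xi: "x i \<in> Ai" and xj: "x j \<in> Aj" for x
  proof -
    define y where "y = T x"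
    have yi: "y i = Gji (x j)" and yj: "y j = Gij (x i)" and yo: "\<And>m. m \<noteq> i \<Longrightarrow> m \<noteq> j \<Longrightarrow> y m = x m"
      unfolding y_def Tx using ijne by auto
    have yiA: "y i \<in> Ai" and yjA: "y j \<in> Aj" using yi yj Ti[of x, OF xi] Tj[of x, OF xj] by auto
    have gy: "Gij (y i) = x j" "Gji (y j) = x i" using yi yj Ti[of x, OF xi] Tj[of x, OF xj] by auto
    define R where "R = (\<Prod>m\<in>{..n}-{i}-{j}. \<pi> (x m) powr \<beta> m)"
    have Ry: "(\<Prod>m\<in>{..n}-{i}-{j}. \<pi> (y m) powr \<beta> m) = R"
      unfolding R_def by (rule prod.cong) (auto simp: yo)
    define u where "u = \<pi> (x i) powr \<beta> i"
    define v where "v = \<pi> (x j) powr \<beta> j"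
    define u' where "u' = \<pi> (Gij (x i)) powr \<beta> j"
    define v' where "v' = \<pi> (Gji (x j)) powr \<beta> i"
    have nn: "u \<ge> 0" "v \<ge> 0" "u' \<ge> 0" "v' \<ge> 0" unfolding u_def v_def u'_def v'_def by auto
    have ax: "\<alpha> x * p x = R * min (u * v) (u' * v')"
    proof -
      have "\<alpha> x = min 1 ((u' * v') / (u * v))"
        unfolding \<alpha>_eq u_def v_def u'_def v'_def using xi xj by simp
      moreover have "p x = (u * v) * R" unfolding psplit u_def v_def R_def by simp
      ultimately show ?thesis using min_mult_div[of "u * v" "u' * v'"] nn by (simp add: ac_simps)
    qed
    have ay: "\<alpha> y * p y = R * min (v' * u') (v * u)"
    proof -
      have "\<alpha> y = min 1 ((v * u) / (v' * u'))"
        unfolding \<alpha>_eq u_def v_def u'_def v'_def using yiA yjA gy yi yj by simp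
      moreover have "p y = (v' * u') * R" unfolding psplit Ry v'_def u'_def yi yj by simp
      ultimately show ?thesis using min_mult_div[of "v' * u'" "v * u"] nn by (simp add: ac_simps)
    qed
    have "\<alpha> y * p y = \<alpha> x * p x" unfolding ax ay by (simp add: ac_simps min.commute)
    then show ?thesis unfolding s_def q_def y_def[symmetric] by (simp add: field_simps)
  qed
  have wS: "w k l x = (if x \<in> S k l then s x else 0)" for k l x
    unfolding w_def S_def by simp
  have wsym: "w k l x = w l k (L k l x)" for k l x
  proof (cases "x \<in> S k l")
    case True
    have "s (L k l x) = s x"
      using fa[OF True, symmetric] fc[of x] True unfolding S_def by auto
    then show ?thesis using True fb[OF True] unfolding wS by simp
  next
    case False
    have "L k l x \<notin> S l k"
    proof
      assume "L k l x \<in> S l k"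
      from fb[OF this] show False using False fd[of l k x] by simp
    qed
    then show ?thesis using False unfolding wS by simp
  qed
  have Aim[measurable]: "Ai \<in> sets borel" "Aj \<in> sets borel" unfolding Ai_def Aj_def by simp_all
  have Zi[measurable]: "(\<lambda>x. Z (x i)) \<in> ?P \<rightarrow>\<^sub>M count_space UNIV" "(\<lambda>x. Z (x j)) \<in> ?P \<rightarrow>\<^sub>M count_space UNIV"
    by measurable
  have wm[measurable]: "w k l \<in> borel_measurable ?P" for k l
    unfolding w_def[abs_def] by measurable
  have dec: "(\<Sum>k\<in>{1..K}. \<Sum>l\<in>{1..K}. w k l x * F k l) = s x * F (Z (x i)) (Z (x j))" for x F
  proof (cases "x i \<in> Ai \<and> x j \<in> Aj")
    case True
    have "(\<Sum>l\<in>{1..K}. w k l x * F k l) = (if k = Z (x i) then s x * F (Z (x i)) (Z (x j)) else 0)" for k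
    proof (cases "k = Z (x i)")
      case True
      have "w k l x * F k l = (if l = Z (x j) then s x * F (Z (x i)) (Z (x j)) else 0)" for l
        unfolding w_def using \<open>x i \<in> Ai \<and> x j \<in> Aj\<close> True by auto
      then show ?thesis using True Z_range[of "x j"] by (simp add: sum.delta)
    next
      case False
      then show ?thesis unfolding w_def by simp
    qed
    then show ?thesis using Z_range[of "x i"] by (simp add: sum.delta)
  next
    case False
    then show ?thesis unfolding w_def s_def using \<alpha>0[OF False] by auto
  qed
  have key: "(\<integral>\<^sup>+ x. s x * f (T x) \<partial>?P) = (\<integral>\<^sup>+ x. s x * f x \<partial>?P)"
    if fm[measurable]: "f \<in> borel_measurable ?P" for f
  proof -
    have e1: "s x * f (T x) = (\<Sum>k\<in>{1..K}. \<Sum>l\<in>{1..K}. w k l x * f (L k l x))" for x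
    proof -
      have "s x * f (T x) = s x * f (L (Z (x i)) (Z (x j)) x)"
      proof (cases "x i \<in> Ai \<and> x j \<in> Aj")
        case True
        then show ?thesis using fa[of x "Z (x i)" "Z (x j)"] unfolding S_def by simp
      next
        case False
        then show ?thesis unfolding s_def using \<alpha>0[OF False] by simp
      qed
      then show ?thesis using dec[of x "\<lambda>k l. f (L k l x)"] by simp
    qed
    have "(\<integral>\<^sup>+ x. s x * f (T x) \<partial>?P) = (\<integral>\<^sup>+ x. (\<Sum>k\<in>{1..K}. \<Sum>l\<in>{1..K}. w k l x * f (L k l x)) \<partial>?P)"
      unfolding e1 ..
    also have "\<dots> = (\<Sum>k\<in>{1..K}. \<Sum>l\<in>{1..K}. \<integral>\<^sup>+ x. w k l x * f (L k l x) \<partial>?P)"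
      by (simp add: nn_integral_sum)
    also have "\<dots> = (\<Sum>k\<in>{1..K}. \<Sum>l\<in>{1..K}. \<integral>\<^sup>+ x. w l k (L k l x) * f (L k l x) \<partial>?P)"
      by (simp flip: wsym)
    also have "\<dots> = (\<Sum>k\<in>{1..K}. \<Sum>l\<in>{1..K}. \<integral>\<^sup>+ y. w l k y * f y \<partial>?P)"
    proof (intro sum.cong refl)
      fix k l
      have "(\<integral>\<^sup>+ y. w l k y * f y \<partial>?P) = (\<integral>\<^sup>+ y. w l k y * f y \<partial>distr ?P ?P (L k l))"
        by (simp add: Lpres)
      also have "\<dots> = (\<integral>\<^sup>+ x. w l k (L k l x) * f (L k l x) \<partial>?P)"
        by (rule nn_integral_distr) simp_all
      finally show "(\<integral>\<^sup>+ x. w l k (L k l x) * f (L k l x) \<partial>?P) = (\<integral>\<^sup>+ y. w l k y * f y \<partial>?P)" by simp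
    qed
    also have "\<dots> = (\<Sum>l\<in>{1..K}. \<Sum>k\<in>{1..K}. \<integral>\<^sup>+ y. w l k y * f y \<partial>?P)"
      by (rule sum.swap)
    also have "\<dots> = (\<integral>\<^sup>+ y. (\<Sum>l\<in>{1..K}. \<Sum>k\<in>{1..K}. w l k y * f y) \<partial>?P)"
      by (simp add: nn_integral_sum)
    also have "\<dots> = (\<integral>\<^sup>+ y. s y * f y \<partial>?P)"
      by (intro nn_integral_cong) (simp only: dec)
    finally show ?thesis .
  qed
  have TM: "tempered_measure \<pi> \<beta> n = density ?P (\<lambda>x. ennreal (q x))"
    unfolding tempered_measure_def q_def c0_def p_def by simp
  show ?thesis
  proof
    fix A assume "A \<in> sets (tempered_measure \<pi> \<beta> n)"
    then have A[measurable]: "A \<in> sets ?P" unfolding TM by simp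
    have Km: "(\<lambda>x. ennreal (swap_kernel \<pi> Z \<mu> \<beta> i j x A)) \<in> borel_measurable ?P"
      unfolding swap_kernel_def \<alpha>_def[symmetric] T_def[symmetric] by measurable
    have pw: "ennreal (q x) * ennreal (swap_kernel \<pi> Z \<mu> \<beta> i j x A)
       = s x * indicator A (T x) + ennreal (q x * (1 - \<alpha> x)) * indicator A x" for x
      unfolding swap_kernel_def \<alpha>_def[symmetric] T_def[symmetric] s_def
      using qnn[of x] \<alpha>01[of x] mult_left_le_one_le[of "q x" "\<alpha> x"]
      by (cases "T x \<in> A"; cases "x \<in> A")
         (simp_all add: ennreal_mult[symmetric] ennreal_plus[symmetric] algebra_simps)
    have pw2: "ennreal (q x) * indicator A x
       = s x * indicator A x + ennreal (q x * (1 - \<alpha> x)) * indicator A x" for x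
      unfolding s_def
      using qnn[of x] \<alpha>01[of x] mult_left_le_one_le[of "q x" "\<alpha> x"]
      by (cases "x \<in> A") (simp_all add: ennreal_mult[symmetric] ennreal_plus[symmetric] algebra_simps)
    have "(\<integral>\<^sup>+ x. ennreal (swap_kernel \<pi> Z \<mu> \<beta> i j x A) \<partial>tempered_measure \<pi> \<beta> n)
       = (\<integral>\<^sup>+ x. ennreal (q x) * ennreal (swap_kernel \<pi> Z \<mu> \<beta> i j x A) \<partial>?P)"
      unfolding TM using Km by (simp add: nn_integral_density)
    also have "\<dots> = (\<integral>\<^sup>+ x. s x * indicator A (T x) \<partial>?P) + (\<integral>\<^sup>+ x. ennreal (q x * (1 - \<alpha> x)) * indicator A x \<partial>?P)"
      unfolding pw by (rule nn_integral_add) simp_all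
    also have "\<dots> = (\<integral>\<^sup>+ x. s x * indicator A x \<partial>?P) + (\<integral>\<^sup>+ x. ennreal (q x * (1 - \<alpha> x)) * indicator A x \<partial>?P)"
      using key[of "indicator A"] by simp
    also have "\<dots> = (\<integral>\<^sup>+ x. ennreal (q x) * indicator A x \<partial>?P)"
      unfolding pw2 by (rule nn_integral_add[symmetric]) simp_all
    also have "\<dots> = emeasure (tempered_measure \<pi> \<beta> n) A"
      unfolding TM by (simp add: emeasure_density)
    finally show "(\<integral>\<^sup>+ x. ennreal (swap_kernel \<pi> Z \<mu> \<beta> i j x A) \<partial>tempered_measure \<pi> \<beta> n)
       = emeasure (tempered_measure \<pi> \<beta> n) A" .
  qed
qed

end
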